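(* Let $\mathcal K$ be an even normalized kernel. For any $\rho>0$, $\theta>0$ and $U\in\mathbb R$, consider the equations $$\sum_{i=1}^2w_i\Delta_j(u_i,\sigma)=\rho\,\Delta_j^{eq}(U,\sqrt\theta),\quad j=0,1,\dots,4,$$ for $W=(w_1,u_1,w_2,u_2,\sigma)\in\Omega^{tot}=\{W\in\mathbb R^5: w_1>0,w_2>0,u_1\le u_2,\sigma>0\}$. If $\mathfrak m_4<3$, the equations have no solution; if $\mathfrak m_4=3$, the solutions are exactly those with $u_1=u_2=U$, $\sigma=\sqrt\theta$ and $w_1+w_2=\rho$; if $\mathfrak m_4>3$, there is a unique solution, given by $$w_1=w_2=\frac\rho2,\quad u_{1,2}=U\mp\nu\sigma,\quad \sigma=\Big(\frac{\theta}{\nu^2+1}\Big)^{1/2},\quad \nu=\Big(\frac{\mathfrak m_4-3}{2}\Big)^{1/4}.$$ In particular, the equilibrium manifold is nonempty if and only if $\mathfrak m_4\ge3$.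
   Context: $\mathcal K:\mathbb R\to[0,\infty)$ is a kernel with $\mathfrak m_j:=\int_{\mathbb R}\xi^j\mathcal K(\xi)\,d\xi<\infty$ for all $j$, normalized: $\mathfrak m_0=1,\mathfrak m_1=0,\mathfrak m_2=1$. $\Delta_j(u,\sigma)=\int\xi^j\frac1\sigma\mathcal K(\frac{\xi-u}{\sigma})d\xi=\sum_{k=0}^j\binom jk\mathfrak m_k\sigma^ku^{j-k}$, and $\Delta^{eq}_j(u,s)=\int\xi^j\frac{1}{\sqrt{2\pi}s}e^{-(\xi-u)^2/(2s^2)}d\xi$. The equilibrium manifold is $\mathcal E=\{M\in\mathcal M(\Omega^{tot}): M_j=\rho\Delta^{eq}_j(U,\sqrt\theta),\ j=0,\dots,4\}$, where $\mathcal M(W)=(M_0,\dots,M_4)$ with $M_j=\sum_{i=1}^2w_i\Delta_j(u_i,\sigma)$, $\rho=M_0$, $U=M_1/M_0$, $\theta=(M_0M_2-M_1^2)/M_0^2$. *)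

theory Defs
  imports "HOL-Analysis.Analysis"
begin

definition kmoment :: "(real \<Rightarrow> real) \<Rightarrow> nat \<Rightarrow> real" where
  "kmoment K j = (LINT x|lborel. x ^ j * K x)"

definition normalized_kernel :: "(real \<Rightarrow> real) \<Rightarrow> bool" where
  "normalized_kernel K \<longleftrightarrow>
     (\<forall>x. 0 \<le> K x) \<and> K \<in> borel_measurable borel \<and>
     (\<forall>j. integrable lborel (\<lambda>x. x ^ j * K x)) \<and>
     kmoment K 0 = 1 \<and> kmoment K 1 = 0 \<and> kmoment K 2 = 1"

definition even_kernel :: "(real \<Rightarrow> real) \<Rightarrow> bool" where
  "even_kernel K \<longleftrightarrow> (\<forall>x. K (- x) = K x)"

definition Delta :: "(real \<Rightarrow> real) \<Rightarrow> nat \<Rightarrow> real \<Rightarrow> real \<Rightarrow> real" where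
  "Delta K j u \<sigma> = (LINT \<xi>|lborel. \<xi> ^ j * ((1 / \<sigma>) * K ((\<xi> - u) / \<sigma>)))"

definition Delta_eq :: "nat \<Rightarrow> real \<Rightarrow> real \<Rightarrow> real" where
  "Delta_eq j u s = (LINT \<xi>|lborel. \<xi> ^ j *
      (1 / (sqrt (2 * pi) * s) * exp (- ((\<xi> - u)\<^sup>2) / (2 * s\<^sup>2))))"

type_synonym param = "real \<times> real \<times> real \<times> real \<times> real"

definition Omega_tot :: "param set" where
  "Omega_tot = {(w1, u1, w2, u2, \<sigma>). w1 > 0 \<and> w2 > 0 \<and> u1 \<le> u2 \<and> \<sigma> > 0}"

definition Mj :: "(real \<Rightarrow> real) \<Rightarrow> param \<Rightarrow> nat \<Rightarrow> real" where
  "Mj K W j = (case W of (w1, u1, w2, u2, \<sigma>) \<Rightarrow> w1 * Delta K j u1 \<sigma> + w2 * Delta K j u2 \<sigma>)"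

definition Mvec :: "(real \<Rightarrow> real) \<Rightarrow> param \<Rightarrow> nat \<Rightarrow> real" where
  "Mvec K W = (\<lambda>j. if j \<le> 4 then Mj K W j else 0)"

definition eq_manifold :: "(real \<Rightarrow> real) \<Rightarrow> (nat \<Rightarrow> real) set" where
  "eq_manifold K = {M. M \<in> Mvec K ` Omega_tot \<and>
     (let \<rho> = M 0; U = M 1 / M 0; \<theta> = (M 0 * M 2 - (M 1)\<^sup>2) / (M 0)\<^sup>2
      in \<forall>j\<le>4. M j = \<rho> * Delta_eq j U (sqrt \<theta>))}"

definition solutions :: "(real \<Rightarrow> real) \<Rightarrow> real \<Rightarrow> real \<Rightarrow> real \<Rightarrow> param set" where
  "solutions K \<rho> U \<theta> = {W \<in> Omega_tot. \<forall>j\<le>4. Mj K W j = \<rho> * Delta_eq j U (sqrt \<theta>)}"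

end

theory Submission
  imports Defs "HOL-Probability.Distributions"
begin
lemma moment_shift:
  fixes f :: "real \<Rightarrow> real"
  assumes int: "\<And>k. integrable lborel (\<lambda>x. x ^ k * f x)" and s: "s > 0"
  shows "(LINT \<xi>|lborel. \<xi> ^ j * ((1 / s) * f ((\<xi> - u) / s)))
     = (\<Sum>k\<le>j. of_nat (j choose k) * (LINT x|lborel. x ^ k * f x) * s ^ k * u ^ (j - k))"
proof -
  have "(LINT \<xi>|lborel. \<xi> ^ j * ((1 / s) * f ((\<xi> - u) / s)))
      = \<bar>s\<bar> *\<^sub>R (LINT x|lborel. (u + s * x) ^ j * ((1 / s) * f (((u + s * x) - u) / s)))"
    by (rule lborel_integral_real_affine) (use s in auto)
  also have "\<dots> = s * (LINT x|lborel. (1 / s) * ((u + s * x) ^ j * f x))"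
    using s by (simp add: ac_simps)
  also have "\<dots> = (LINT x|lborel. (u + s * x) ^ j * f x)"
    using s by simp
  also have "\<dots> = (LINT x|lborel. (\<Sum>k\<le>j. of_nat (j choose k) * s ^ k * u ^ (j - k) * (x ^ k * f x)))"
  proof (rule Bochner_Integration.integral_cong)
    fix x
    have "(u + s * x) ^ j = (s * x + u) ^ j" by (simp add: add.commute)
    also have "\<dots> = (\<Sum>k\<le>j. of_nat (j choose k) * (s*x) ^ k * u ^ (j - k))" by (rule binomial_ring)
    finally show "(u + s * x) ^ j * f x = (\<Sum>k\<le>j. of_nat (j choose k) * s ^ k * u ^ (j - k) * (x ^ k * f x))"
      by (simp add: sum_distrib_right sum_distrib_left power_mult_distrib mult_ac)
  qed simp
  also have "\<dots> = (\<Sum>k\<le>j. of_nat (j choose k) * s ^ k * u ^ (j - k) * (LINT x|lborel. x ^ k * f x))"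
    by (subst Bochner_Integration.integral_sum) (auto intro: int simp: integral_mult_right_zero)
  finally show ?thesis by (simp add: ac_simps)
qed


lemma Delta_sum:
  assumes "normalized_kernel K" "\<sigma> > 0"
  shows "Delta K j u \<sigma> = (\<Sum>k\<le>j. of_nat (j choose k) * kmoment K k * \<sigma> ^ k * u ^ (j - k))"
  unfolding Delta_def kmoment_def
  by (rule moment_shift) (use assms in \<open>auto simp: normalized_kernel_def\<close>)

lemma kmoment3:
  assumes "normalized_kernel K" "even_kernel K"
  shows "kmoment K 3 = 0"
proof -
  have "kmoment K 3 = \<bar>-1\<bar> *\<^sub>R (LINT x|lborel. (0 + (-1) * x) ^ 3 * K (0 + (-1) * x))"
    unfolding kmoment_def by (rule lborel_integral_real_affine) simp
  also have "\<dots> = - kmoment K 3"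
    using assms(2) by (simp add: kmoment_def even_kernel_def)
  finally show ?thesis by simp
qed

lemma Delta_vals:
  assumes "normalized_kernel K" "even_kernel K" "\<sigma> > 0"
  shows "Delta K 0 u \<sigma> = 1" "Delta K 1 u \<sigma> = u" "Delta K 2 u \<sigma> = u^2 + \<sigma>^2"
    "Delta K 3 u \<sigma> = u^3 + 3 * u * \<sigma>^2"
    "Delta K 4 u \<sigma> = u^4 + 6 * u^2 * \<sigma>^2 + kmoment K 4 * \<sigma>^4"
proof -
  note s = Delta_sum[OF assms(1,3)]
  have m: "kmoment K 0 = 1" "kmoment K 1 = 0" "kmoment K 2 = 1" "kmoment K 3 = 0"
    using assms(1) kmoment3[OF assms(1,2)] by (auto simp: normalized_kernel_def)
  have m2: "kmoment K (Suc 0) = 0" "kmoment K (Suc (Suc 0)) = 1" "kmoment K (Suc (Suc (Suc 0))) = 0"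
    using m by (simp_all add: eval_nat_numeral)
  note m = m m2
  show "Delta K 0 u \<sigma> = 1" by (simp add: s m)
  show "Delta K 1 u \<sigma> = u" by (simp add: s m)
  show "Delta K 2 u \<sigma> = u^2 + \<sigma>^2" by (simp add: s m eval_nat_numeral)
  show "Delta K 3 u \<sigma> = u^3 + 3 * u * \<sigma>^2" by (simp add: s m eval_nat_numeral)
  show "Delta K 4 u \<sigma> = u^4 + 6 * u^2 * \<sigma>^2 + kmoment K 4 * \<sigma>^4" by (simp add: s m eval_nat_numeral)
qed

lemma Delta_eq_vals:
  assumes "s > 0"
  shows "Delta_eq 0 u s = 1" "Delta_eq 1 u s = u" "Delta_eq 2 u s = u^2 + s^2"
    "Delta_eq 3 u s = u^3 + 3 * u * s^2"
    "Delta_eq 4 u s = u^4 + 6 * u^2 * s^2 + 3 * s^4"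
proof -
  have eq: "Delta_eq j u s = (\<Sum>k\<le>j. of_nat (j choose k) * (LINT x|lborel. x ^ k * std_normal_density x) * s ^ k * u ^ (j - k))" for j
  proof -
    have "Delta_eq j u s = (LINT \<xi>|lborel. \<xi> ^ j * ((1 / s) * std_normal_density ((\<xi> - u) / s)))"
      unfolding Delta_eq_def std_normal_density_def
      using assms by (simp add: power_divide field_simps)
    also have "\<dots> = (\<Sum>k\<le>j. of_nat (j choose k) * (LINT x|lborel. x ^ k * std_normal_density x) * s ^ k * u ^ (j - k))"
      by (rule moment_shift) (use assms integrable_std_normal_moment in \<open>auto simp: mult.commute\<close>)
    finally show ?thesis .
  qed
  have g0: "(LINT x|lborel. x ^ 0 * std_normal_density x) = 1"
    using integral_std_normal_moment_even[of 0] by simp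
  have g1: "(LINT x|lborel. x ^ 1 * std_normal_density x) = 0"
    using integral_std_normal_moment_odd[of 0] by (simp add: mult.commute)
  have g2: "(LINT x|lborel. x ^ 2 * std_normal_density x) = 1"
    using integral_std_normal_moment_even[of 1] by (simp add: mult.commute)
  have g3: "(LINT x|lborel. x ^ 3 * std_normal_density x) = 0"
    using integral_std_normal_moment_odd[of 1] by (simp add: mult.commute)
  have g4: "(LINT x|lborel. x ^ 4 * std_normal_density x) = 3"
    using integral_std_normal_moment_even[of 2] by (simp add: mult.commute fact_numeral)
  show "Delta_eq 0 u s = 1" "Delta_eq 1 u s = u" "Delta_eq 2 u s = u^2 + s^2"
    "Delta_eq 3 u s = u^3 + 3 * u * s^2"
    "Delta_eq 4 u s = u^4 + 6 * u^2 * s^2 + 3 * s^4"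
    unfolding eq using g0 g1 g2 g3 g4
    by (simp_all add: eval_nat_numeral)
qed


lemma alg:
  fixes m4 w1 w2 u1 u2 \<sigma> \<rho> \<theta> U :: real
  assumes pos: "w1 > 0" "w2 > 0" "u1 \<le> u2" "\<sigma> > 0" "\<rho> > 0"
    and E0: "w1 + w2 = \<rho>"
    and E1: "w1 * u1 + w2 * u2 = \<rho> * U"
    and E2: "w1 * (u1^2 + \<sigma>^2) + w2 * (u2^2 + \<sigma>^2) = \<rho> * (U^2 + \<theta>)"
    and E3: "w1 * (u1^3 + 3 * u1 * \<sigma>^2) + w2 * (u2^3 + 3 * u2 * \<sigma>^2) = \<rho> * (U^3 + 3 * U * \<theta>)"
    and E4: "w1 * (u1^4 + 6 * u1^2 * \<sigma>^2 + m4 * \<sigma>^4) + w2 * (u2^4 + 6 * u2^2 * \<sigma>^2 + m4 * \<sigma>^4)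
             = \<rho> * (U^4 + 6 * U^2 * \<theta> + 3 * \<theta>^2)"
  shows "\<exists>d\<ge>0. u1 = U - d \<and> u2 = U + d \<and> d^2 + \<sigma>^2 = \<theta> \<and> (m4 - 3) * \<sigma>^4 = 2 * d^4 \<and> (d > 0 \<longrightarrow> w1 = w2)"
proof -
  define a1 where "a1 = u1 - U"
  define a2 where "a2 = u2 - U"
  have u1: "u1 = U + a1" and u2: "u2 = U + a2" by (simp_all add: a1_def a2_def)
  have C1: "w1 * a1 + w2 * a2 = 0"
  proof -
    have "w1 * a1 + w2 * a2 = (w1 * u1 + w2 * u2 - \<rho> * U) - U * (w1 + w2 - \<rho>)"
      unfolding u1 u2 by algebra
    then show ?thesis using E0 E1 by simp
  qed
  have C2: "w1 * a1^2 + w2 * a2^2 + \<rho> * \<sigma>^2 = \<rho> * \<theta>"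
  proof -
    have "w1 * a1^2 + w2 * a2^2 + \<rho> * \<sigma>^2 - \<rho> * \<theta> =
       (w1 * (u1^2 + \<sigma>^2) + w2 * (u2^2 + \<sigma>^2) - \<rho> * (U^2 + \<theta>))
       - 2 * U * (w1 * u1 + w2 * u2 - \<rho> * U) + (U^2 - \<sigma>^2) * (w1 + w2 - \<rho>)"
      unfolding u1 u2 by algebra
    then show ?thesis using E0 E1 E2 by simp
  qed
  have C3: "w1 * a1^3 + w2 * a2^3 = 0"
  proof -
    have "w1 * a1^3 + w2 * a2^3 + 3 * \<sigma>^2 * (w1 * a1 + w2 * a2) =
       (w1 * (u1^3 + 3 * u1 * \<sigma>^2) + w2 * (u2^3 + 3 * u2 * \<sigma>^2) - \<rho> * (U^3 + 3 * U * \<theta>))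
       - 3 * U * (w1 * (u1^2 + \<sigma>^2) + w2 * (u2^2 + \<sigma>^2) - \<rho> * (U^2 + \<theta>))
       + 3 * U^2 * (w1 * u1 + w2 * u2 - \<rho> * U) - U^3 * (w1 + w2 - \<rho>)"
      unfolding u1 u2 by algebra
    then show ?thesis using E0 E1 E2 E3 C1 by simp
  qed
  have C4: "w1 * a1^4 + w2 * a2^4 + 6 * \<sigma>^2 * (w1 * a1^2 + w2 * a2^2) + \<rho> * m4 * \<sigma>^4 = 3 * \<rho> * \<theta>^2"
  proof -
    have "w1 * a1^4 + w2 * a2^4 + 6 * \<sigma>^2 * (w1 * a1^2 + w2 * a2^2) + \<rho> * m4 * \<sigma>^4 - 3 * \<rho> * \<theta>^2 =
       (w1 * (u1^4 + 6 * u1^2 * \<sigma>^2 + m4 * \<sigma>^4) + w2 * (u2^4 + 6 * u2^2 * \<sigma>^2 + m4 * \<sigma>^4)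
             - \<rho> * (U^4 + 6 * U^2 * \<theta> + 3 * \<theta>^2))
       - 4 * U * (w1 * (u1^3 + 3 * u1 * \<sigma>^2) + w2 * (u2^3 + 3 * u2 * \<sigma>^2) - \<rho> * (U^3 + 3 * U * \<theta>))
       + 6 * U^2 * (w1 * (u1^2 + \<sigma>^2) + w2 * (u2^2 + \<sigma>^2) - \<rho> * (U^2 + \<theta>))
       - 4 * U^3 * (w1 * u1 + w2 * u2 - \<rho> * U) + (U^4 - m4 * \<sigma>^4) * (w1 + w2 - \<rho>)"
      unfolding u1 u2 by algebra
    then show ?thesis using E0 E1 E2 E3 E4 by simp
  qed
  have a12: "a1 \<le> a2" using pos(3) by (simp add: a1_def a2_def)
  have sym: "a1 = - a2 \<and> (a2 > 0 \<longrightarrow> w1 = w2)"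
  proof (cases "a1 = 0")
    case True
    then have "w2 * a2 = 0" using C1 by simp
    then have "a2 = 0" using pos(2) by simp
    then show ?thesis using True by simp
  next
    case False
    have h: "w2 * a2 = - (w1 * a1)" using C1 by simp
    have "w2 * a2^3 = (w2 * a2) * a2^2" by algebra
    then have "w2 * a2^3 = - (w1 * a1) * a2^2" using h by simp
    then have "w1 * a1 * (a1^2 - a2^2) = 0" using C3 by algebra
    then have "a1^2 = a2^2" using False pos(1) by simp
    then have "a1 = a2 \<or> a1 = - a2" by (simp add: power2_eq_iff)
    moreover have "a1 \<noteq> a2"
    proof
      assume "a1 = a2"
      then have "(w1 + w2) * a1 = 0" using C1 by (simp add: algebra_simps)
      then show False using False pos(1,2) by simp
    qed
    ultimately have e: "a1 = - a2" by simp
    then have "(w1 - w2) * a1 = 0" using C1 by (simp add: algebra_simps)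
    then have "w1 = w2" using False by simp
    then show ?thesis using e by simp
  qed
  have d0: "a2 \<ge> 0" using sym a12 by simp
  have "\<rho> * (a2^2 + \<sigma>^2) = \<rho> * \<theta>" using C2 sym E0 by algebra
  then have D2: "a2^2 + \<sigma>^2 = \<theta>" using pos(5) by simp
  have "\<rho> * (a2^4 + 6 * \<sigma>^2 * a2^2 + m4 * \<sigma>^4) = \<rho> * (3 * \<theta>^2)" using C4 sym E0 by algebra
  then have "a2^4 + 6 * \<sigma>^2 * a2^2 + m4 * \<sigma>^4 = 3 * (a2^2 + \<sigma>^2)^2" using pos(5) D2 by simp
  then have D4: "(m4 - 3) * \<sigma>^4 = 2 * a2^4" by algebra
  show ?thesis
    by (rule exI[of _ a2]) (use d0 sym D2 D4 in \<open>auto simp: a1_def a2_def\<close>)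
qed


lemma all_le4: "(\<forall>j\<le>(4::nat). P j) \<longleftrightarrow> P 0 \<and> P 1 \<and> P 2 \<and> P 3 \<and> P 4"
proof
  assume "P 0 \<and> P 1 \<and> P 2 \<and> P 3 \<and> P 4"
  then show "\<forall>j\<le>4. P j"
    by (auto simp: le_Suc_eq eval_nat_numeral)
qed auto

lemma sol_char:
  assumes K: "normalized_kernel K" "even_kernel K" and th: "\<theta> > 0"
  shows "(w1, u1, w2, u2, \<sigma>) \<in> solutions K \<rho> U \<theta> \<longleftrightarrow>
    w1 > 0 \<and> w2 > 0 \<and> u1 \<le> u2 \<and> \<sigma> > 0 \<and>
    w1 + w2 = \<rho> \<and>
    w1 * u1 + w2 * u2 = \<rho> * U \<and>
    w1 * (u1^2 + \<sigma>^2) + w2 * (u2^2 + \<sigma>^2) = \<rho> * (U^2 + \<theta>) \<and>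
    w1 * (u1^3 + 3 * u1 * \<sigma>^2) + w2 * (u2^3 + 3 * u2 * \<sigma>^2) = \<rho> * (U^3 + 3 * U * \<theta>) \<and>
    w1 * (u1^4 + 6 * u1^2 * \<sigma>^2 + kmoment K 4 * \<sigma>^4) + w2 * (u2^4 + 6 * u2^2 * \<sigma>^2 + kmoment K 4 * \<sigma>^4)
             = \<rho> * (U^4 + 6 * U^2 * \<theta> + 3 * \<theta>^2)"
proof (cases "\<sigma> > 0")
  case True
  have s: "sqrt \<theta> > 0" using th by simp
  have s2: "sqrt \<theta> ^ 2 = \<theta>" using th by simp
  have s4: "sqrt \<theta> ^ 4 = \<theta>^2" using s2 by (metis power_mult numeral_Bit0 mult_2 numeral_One power_one_right power_add)
  show ?thesis
    unfolding solutions_def Omega_tot_def all_le4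
    using Delta_vals[OF K True] Delta_eq_vals[OF s] s2 s4 True
    by (simp add: Mj_def)
next
  case False
  then show ?thesis unfolding solutions_def Omega_tot_def by auto
qed


lemma part1:
  assumes K: "normalized_kernel K" "even_kernel K" and r: "\<rho> > 0" and th: "\<theta> > 0"
    and m: "kmoment K 4 < 3"
  shows "solutions K \<rho> U \<theta> = {}"
proof (rule ccontr)
  assume "solutions K \<rho> U \<theta> \<noteq> {}"
  then obtain w1 u1 w2 u2 \<sigma> where "(w1, u1, w2, u2, \<sigma>) \<in> solutions K \<rho> U \<theta>"
    by (metis ex_in_conv prod_cases5)
  then have H: "w1 > 0 \<and> w2 > 0 \<and> u1 \<le> u2 \<and> \<sigma> > 0 \<and>
    w1 + w2 = \<rho> \<and>
    w1 * u1 + w2 * u2 = \<rho> * U \<and>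
    w1 * (u1^2 + \<sigma>^2) + w2 * (u2^2 + \<sigma>^2) = \<rho> * (U^2 + \<theta>) \<and>
    w1 * (u1^3 + 3 * u1 * \<sigma>^2) + w2 * (u2^3 + 3 * u2 * \<sigma>^2) = \<rho> * (U^3 + 3 * U * \<theta>) \<and>
    w1 * (u1^4 + 6 * u1^2 * \<sigma>^2 + kmoment K 4 * \<sigma>^4) + w2 * (u2^4 + 6 * u2^2 * \<sigma>^2 + kmoment K 4 * \<sigma>^4)
             = \<rho> * (U^4 + 6 * U^2 * \<theta> + 3 * \<theta>^2)"
    using sol_char[OF K th] by blast
  then obtain d where "d \<ge> 0" "(kmoment K 4 - 3) * \<sigma>^4 = 2 * d^4"
    using alg[of w1 w2 u1 u2 \<sigma> \<rho> U \<theta> "kmoment K 4"] r by blast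
  moreover have "\<sigma>^4 > 0" using H by simp
  moreover have "(kmoment K 4 - 3) * \<sigma>^4 < 0" using m calculation(3) by (simp add: mult_neg_pos)
  ultimately show False by (smt (verit) zero_le_power)
qed

lemma part2:
  assumes K: "normalized_kernel K" "even_kernel K" and r: "\<rho> > 0" and th: "\<theta> > 0"
    and m: "kmoment K 4 = 3"
  shows "solutions K \<rho> U \<theta> = {(w1, U, w2, U, sqrt \<theta>) | w1 w2. w1 > 0 \<and> w2 > 0 \<and> w1 + w2 = \<rho>}"
proof (intro equalityI subsetI)
  fix W assume W: "W \<in> solutions K \<rho> U \<theta>"
  obtain w1 u1 w2 u2 \<sigma> where Wd: "W = (w1, u1, w2, u2, \<sigma>)" by (metis prod_cases5)
  have H: "w1 > 0 \<and> w2 > 0 \<and> u1 \<le> u2 \<and> \<sigma> > 0 \<and>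
    w1 + w2 = \<rho> \<and>
    w1 * u1 + w2 * u2 = \<rho> * U \<and>
    w1 * (u1^2 + \<sigma>^2) + w2 * (u2^2 + \<sigma>^2) = \<rho> * (U^2 + \<theta>) \<and>
    w1 * (u1^3 + 3 * u1 * \<sigma>^2) + w2 * (u2^3 + 3 * u2 * \<sigma>^2) = \<rho> * (U^3 + 3 * U * \<theta>) \<and>
    w1 * (u1^4 + 6 * u1^2 * \<sigma>^2 + kmoment K 4 * \<sigma>^4) + w2 * (u2^4 + 6 * u2^2 * \<sigma>^2 + kmoment K 4 * \<sigma>^4)
             = \<rho> * (U^4 + 6 * U^2 * \<theta> + 3 * \<theta>^2)"
    using sol_char[OF K th] W Wd by blast
  then obtain d where d: "d \<ge> 0" "u1 = U - d" "u2 = U + d" "d^2 + \<sigma>^2 = \<theta>" "(kmoment K 4 - 3) * \<sigma>^4 = 2 * d^4"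
    using alg[of w1 w2 u1 u2 \<sigma> \<rho> U \<theta> "kmoment K 4"] r by blast
  then have "d = 0" using m by simp
  then have "\<sigma> = sqrt \<theta>" using d H by (simp add: real_sqrt_unique)
  then show "W \<in> {(w1, U, w2, U, sqrt \<theta>) | w1 w2. w1 > 0 \<and> w2 > 0 \<and> w1 + w2 = \<rho>}"
    using H d \<open>d = 0\<close> Wd by auto
next
  fix W assume "W \<in> {(w1, U, w2, U, sqrt \<theta>) | w1 w2. w1 > 0 \<and> w2 > 0 \<and> w1 + w2 = \<rho>}"
  then obtain w1 w2 where Wd: "W = (w1, U, w2, U, sqrt \<theta>)" and wp: "w1 > 0" "w2 > 0" "w1 + w2 = \<rho>"
    by blast
  have s2: "sqrt \<theta> ^ 2 = \<theta>" using th by simp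
  have s4: "sqrt \<theta> ^ 4 = \<theta>^2" using s2 by (metis power_mult numeral_Bit0 mult_2)
  have rr: "\<rho> = w1 + w2" using wp by simp
  show "W \<in> solutions K \<rho> U \<theta>"
    unfolding Wd sol_char[OF K th] using th m wp s2 s4
    by (simp add: rr algebra_simps)
qed


lemma part3:
  assumes K: "normalized_kernel K" "even_kernel K" and r: "\<rho> > 0" and th: "\<theta> > 0"
    and m: "kmoment K 4 > 3"
  shows "(let \<nu> = ((kmoment K 4 - 3) / 2) powr (1 / 4);
               \<sigma> = sqrt (\<theta> / (\<nu>\<^sup>2 + 1))
           in solutions K \<rho> U \<theta> = {(\<rho> / 2, U - \<nu> * \<sigma>, \<rho> / 2, U + \<nu> * \<sigma>, \<sigma>)})"
proof -
  define m4 where "m4 = kmoment K 4"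
  define \<nu> where "\<nu> = ((m4 - 3) / 2) powr (1 / 4)"
  define \<sigma>0 where "\<sigma>0 = sqrt (\<theta> / (\<nu>\<^sup>2 + 1))"
  have nu0: "\<nu> > 0" using m by (simp add: \<nu>_def m4_def)
  have nu4: "\<nu> ^ 4 = (m4 - 3) / 2"
    unfolding \<nu>_def using m by (subst powr_power) (auto simp: m4_def)
  have s0: "\<sigma>0 > 0" using th nu0 by (simp add: \<sigma>0_def add_pos_nonneg)
  have s02: "\<sigma>0 ^ 2 = \<theta> / (\<nu>\<^sup>2 + 1)" using th nu0 by (simp add: \<sigma>0_def add_pos_nonneg)
  have np: "\<nu>\<^sup>2 + 1 > 0" by (smt (verit) zero_le_power2)
  have thd: "\<theta> = \<sigma>0 ^ 2 * (\<nu>\<^sup>2 + 1)" using s02 np by simp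
  have m4d: "m4 = 2 * \<nu> ^ 4 + 3" using nu4 by simp
  have "solutions K \<rho> U \<theta> = {(\<rho> / 2, U - \<nu> * \<sigma>0, \<rho> / 2, U + \<nu> * \<sigma>0, \<sigma>0)}"
  proof (intro equalityI subsetI)
    fix W assume W: "W \<in> solutions K \<rho> U \<theta>"
    obtain w1 u1 w2 u2 \<sigma> where Wd: "W = (w1, u1, w2, u2, \<sigma>)" by (metis prod_cases5)
    have H: "w1 > 0 \<and> w2 > 0 \<and> u1 \<le> u2 \<and> \<sigma> > 0 \<and>
      w1 + w2 = \<rho> \<and>
      w1 * u1 + w2 * u2 = \<rho> * U \<and>
      w1 * (u1^2 + \<sigma>^2) + w2 * (u2^2 + \<sigma>^2) = \<rho> * (U^2 + \<theta>) \<and>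
      w1 * (u1^3 + 3 * u1 * \<sigma>^2) + w2 * (u2^3 + 3 * u2 * \<sigma>^2) = \<rho> * (U^3 + 3 * U * \<theta>) \<and>
      w1 * (u1^4 + 6 * u1^2 * \<sigma>^2 + kmoment K 4 * \<sigma>^4) + w2 * (u2^4 + 6 * u2^2 * \<sigma>^2 + kmoment K 4 * \<sigma>^4)
               = \<rho> * (U^4 + 6 * U^2 * \<theta> + 3 * \<theta>^2)"
      using sol_char[OF K th] W Wd by blast
    then obtain d where d: "d \<ge> 0" "u1 = U - d" "u2 = U + d" "d^2 + \<sigma>^2 = \<theta>"
       "(m4 - 3) * \<sigma>^4 = 2 * d^4" "d > 0 \<longrightarrow> w1 = w2"
      using alg[of w1 w2 u1 u2 \<sigma> \<rho> U \<theta> "kmoment K 4"] r unfolding m4_def by blast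
    have "d ^ 4 = (\<nu> * \<sigma>) ^ 4" using d(5) m4d by (simp add: power_mult_distrib)
    then have dd: "d = \<nu> * \<sigma>"
      by (rule power_eq_imp_eq_base) (use d nu0 H in auto)
    then have "d > 0" using nu0 H by simp
    then have "w1 = \<rho> / 2" "w2 = \<rho> / 2" using d H by auto
    moreover have "\<sigma> = \<sigma>0"
    proof -
      have "\<sigma>^2 * (\<nu>\<^sup>2 + 1) = \<theta>" using d(4) dd by (simp add: power_mult_distrib algebra_simps)
      then have "\<sigma>^2 = \<theta> / (\<nu>\<^sup>2 + 1)" using np by (simp add: field_simps)
      then show ?thesis unfolding \<sigma>0_def using H by (simp add: real_sqrt_unique)
    qed
    ultimately show "W \<in> {(\<rho> / 2, U - \<nu> * \<sigma>0, \<rho> / 2, U + \<nu> * \<sigma>0, \<sigma>0)}"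
      using Wd d dd by simp
  next
    fix W assume "W \<in> {(\<rho> / 2, U - \<nu> * \<sigma>0, \<rho> / 2, U + \<nu> * \<sigma>0, \<sigma>0)}"
    then have Wd: "W = (\<rho> / 2, U - \<nu> * \<sigma>0, \<rho> / 2, U + \<nu> * \<sigma>0, \<sigma>0)" by simp
    have le: "U - \<nu> * \<sigma>0 \<le> U + \<nu> * \<sigma>0" using nu0 s0 by simp
    show "W \<in> solutions K \<rho> U \<theta>"
      unfolding Wd sol_char[OF K th] m4_def[symmetric]
      using r s0 le by (unfold m4d thd) (simp add: field_simps power2_eq_square power3_eq_cube power4_eq_xxxx)
  qed
  then show ?thesis by (simp add: Let_def m4_def \<nu>_def \<sigma>0_def)
qed


lemma part4:
  assumes K: "normalized_kernel K" "even_kernel K"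
  shows "eq_manifold K \<noteq> {} \<longleftrightarrow> kmoment K 4 \<ge> 3"
proof
  assume "eq_manifold K \<noteq> {}"
  then obtain M where M: "M \<in> eq_manifold K" by blast
  then obtain W where W: "W \<in> Omega_tot" and MW: "M = Mvec K W" unfolding eq_manifold_def by blast
  obtain w1 u1 w2 u2 \<sigma> where Wd: "W = (w1, u1, w2, u2, \<sigma>)" by (metis prod_cases5)
  have pos: "w1 > 0" "w2 > 0" "\<sigma> > 0" using W Wd by (auto simp: Omega_tot_def)
  define \<rho>' where "\<rho>' = M 0"
  define U' where "U' = M 1 / M 0"
  define \<theta>' where "\<theta>' = (M 0 * M 2 - (M 1)\<^sup>2) / (M 0)\<^sup>2"
  have M0: "M 0 = w1 + w2" and M1: "M 1 = w1 * u1 + w2 * u2"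
    and M2: "M 2 = w1 * (u1^2 + \<sigma>^2) + w2 * (u2^2 + \<sigma>^2)"
    using Delta_vals[OF K pos(3)] by (simp_all add: MW Mvec_def Mj_def Wd)
  have r: "\<rho>' > 0" using pos by (simp add: \<rho>'_def M0)
  have "M 0 * M 2 - (M 1)\<^sup>2 = (w1 + w2)^2 * \<sigma>^2 + w1 * w2 * (u1 - u2)^2"
    unfolding M0 M1 M2 by algebra
  also have "\<dots> > 0" using pos by (simp add: add_pos_nonneg)
  finally have th: "\<theta>' > 0" using r by (simp add: \<theta>'_def \<rho>'_def)
  have "\<forall>j\<le>4. M j = \<rho>' * Delta_eq j U' (sqrt \<theta>')"
    using M unfolding eq_manifold_def \<rho>'_def U'_def \<theta>'_def Let_def by blast
  then have "W \<in> solutions K \<rho>' U' \<theta>'"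
    unfolding solutions_def using W by (simp add: MW Mvec_def)
  then show "kmoment K 4 \<ge> 3" using part1[OF K r th, of U'] by (cases "kmoment K 4 < 3") auto
next
  assume m: "kmoment K 4 \<ge> 3"
  obtain W where W: "W \<in> solutions K 1 0 1"
  proof (cases "kmoment K 4 = 3")
    case True
    show ?thesis by (rule that[of "(1/2, 0, 1/2, 0, sqrt 1)"]) (simp add: part2[OF K _ _ True], rule exI[of _ "1/2"], simp, rule exI[of _ "1/2"], simp)
  next
    case False
    then have "kmoment K 4 > 3" using m by simp
    from part3[OF K _ _ this, of 1 1 0] show ?thesis
      by (auto simp: Let_def intro: that)
  qed
  have WO: "W \<in> Omega_tot" and E: "\<forall>j\<le>4. Mj K W j = 1 * Delta_eq j 0 (sqrt 1)"
    using W unfolding solutions_def by auto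
  define M where "M = Mvec K W"
  have Mj: "M j = Delta_eq j 0 1" if "j \<le> 4" for j using E that by (simp add: M_def Mvec_def)
  have M0: "M 0 = 1" and M1: "M 1 = 0" and M2: "M 2 = 1"
    using Mj[of 0] Mj[of 1] Mj[of 2] Delta_eq_vals[of 1 0] by simp_all
  have "M \<in> eq_manifold K"
    unfolding eq_manifold_def Let_def M0 M1 M2 using WO Mj Delta_eq_vals[of 1 0] by (auto simp: M_def)
  then show "eq_manifold K \<noteq> {}" by blast
qed

theorem proposition5p1:
  fixes K :: "real \<Rightarrow> real" and \<rho> \<theta> U :: real
  assumes "normalized_kernel K" and "even_kernel K"
    and "\<rho> > 0" and "\<theta> > 0"
  shows "(kmoment K 4 < 3 \<longrightarrow> solutions K \<rho> U \<theta> = {})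
    \<and> (kmoment K 4 = 3 \<longrightarrow> solutions K \<rho> U \<theta> =
          {(w1, U, w2, U, sqrt \<theta>) | w1 w2. w1 > 0 \<and> w2 > 0 \<and> w1 + w2 = \<rho>})
    \<and> (kmoment K 4 > 3 \<longrightarrow>
          (let \<nu> = ((kmoment K 4 - 3) / 2) powr (1 / 4);
               \<sigma> = sqrt (\<theta> / (\<nu>\<^sup>2 + 1))
           in solutions K \<rho> U \<theta> = {(\<rho> / 2, U - \<nu> * \<sigma>, \<rho> / 2, U + \<nu> * \<sigma>, \<sigma>)}))
    \<and> (eq_manifold K \<noteq> {} \<longleftrightarrow> kmoment K 4 \<ge> 3)"
  using part1[OF assms] part2[OF assms] part3[OF assms] part4[OF assms(1,2)] by blast

end
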